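(* Let $L\subset M$ be Noetherian $R_2$-modules such that $M/L\cong R_2/\mathfrak{p}$ for a prime ideal $\mathfrak{p}\subset R_2$, let $\Lambda\in\mathcal{L}_2$, and assume $M/\mathfrak{b}_\Lambda M$ is finite. Then there is an ideal $\mathfrak{a}\subset R_2$ with $\mathfrak{b}_\Lambda\mathfrak{p}\subset\mathfrak{a}\subset\mathfrak{b}_\Lambda\cap\mathfrak{p}$ such that \[|M/\mathfrak{b}_\Lambda M|=\left|\frac{R_2/\mathfrak{p}}{\mathfrak{b}_\Lambda(R_2/\mathfrak{p})}\right|\cdot\frac{|L/\mathfrak{b}_\Lambda L|}{|(\mathfrak{b}_\Lambda\cap\mathfrak{p})/\mathfrak{a}|}.\]
   Context: $R_2=\mathbb{Z}[u_1^{\pm1},u_2^{\pm1}]$; $\mathcal{L}_2$ is the set of finite-index subgroups of $\mathbb{Z}^2$; for $\Lambda\in\mathcal{L}_2$, $\mathfrak{b}_\Lambda$ is the ideal of $R_2$ generated by $\{u^{\mathbf{n}}-1:\mathbf{n}\in\Lambda\}$ with $u^{\mathbf{n}}=u_1^{n_1}u_2^{n_2}$. *)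

theory Defs
  imports Complex_Main "HOL-Library.Poly_Mapping" "HOL-Library.Product_Plus"
begin

text \<open>R_2 = Z[u1^{+-1}, u2^{+-1}] realised as the group ring of Z^2:
  finitely supported functions Z^2 -> Z with convolution product.\<close>
type_synonym R2 = "(int \<times> int) \<Rightarrow>\<^sub>0 int"

definition upow :: "int \<times> int \<Rightarrow> R2" where
  "upow n = Poly_Mapping.single n 1"

definition is_ideal :: "R2 set \<Rightarrow> bool" where
  "is_ideal I \<longleftrightarrow> module.subspace ((*) :: R2 \<Rightarrow> R2 \<Rightarrow> R2) I"

definition ideal_gen :: "R2 set \<Rightarrow> R2 set" where
  "ideal_gen S = module.span ((*) :: R2 \<Rightarrow> R2 \<Rightarrow> R2) S"

definition prime_ideal :: "R2 set \<Rightarrow> bool" where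
  "prime_ideal P \<longleftrightarrow> is_ideal P \<and> P \<noteq> UNIV \<and>
     (\<forall>a b. a * b \<in> P \<longrightarrow> a \<in> P \<or> b \<in> P)"

definition ideal_prod :: "R2 set \<Rightarrow> R2 set \<Rightarrow> R2 set" where
  "ideal_prod I J = ideal_gen {x * y | x y. x \<in> I \<and> y \<in> J}"

definition ideal_sum :: "R2 set \<Rightarrow> R2 set \<Rightarrow> R2 set" where
  "ideal_sum I J = {x + y | x y. x \<in> I \<and> y \<in> J}"

definition finite_index_subgroup :: "(int \<times> int) set \<Rightarrow> bool" where
  "finite_index_subgroup \<Lambda> \<longleftrightarrow> 0 \<in> \<Lambda> \<and> (\<forall>x\<in>\<Lambda>. \<forall>y\<in>\<Lambda>. x - y \<in> \<Lambda>) \<and>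
     finite ((\<lambda>x. {y. x - y \<in> \<Lambda>}) ` UNIV)"

definition b_ideal :: "(int \<times> int) set \<Rightarrow> R2 set" where
  "b_ideal \<Lambda> = ideal_gen {upow n - 1 | n. n \<in> \<Lambda>}"

definition ideal_smult :: "(R2 \<Rightarrow> 'm \<Rightarrow> 'm::ab_group_add) \<Rightarrow> R2 set \<Rightarrow> 'm set \<Rightarrow> 'm set" where
  "ideal_smult s I N = module.span s {s r m | r m. r \<in> I \<and> m \<in> N}"

definition quot :: "'a::ab_group_add set \<Rightarrow> 'a set \<Rightarrow> 'a set set" where
  "quot N K = (\<lambda>x. {y \<in> N. x - y \<in> K}) ` N"

definition noetherian_submodule :: "(R2 \<Rightarrow> 'm \<Rightarrow> 'm::ab_group_add) \<Rightarrow> 'm set \<Rightarrow> bool" where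
  "noetherian_submodule s N \<longleftrightarrow> module.subspace s N \<and>
     (\<forall>K. module.subspace s K \<and> K \<subseteq> N \<longrightarrow> (\<exists>F. finite F \<and> module.span s F = K))"

text \<open>M/L is isomorphic to R2/P as R2-modules, expressed on representatives:
  phi induces an R2-linear bijection M/L -> R2/P.\<close>
definition quot_iso_R_mod :: "(R2 \<Rightarrow> 'm \<Rightarrow> 'm::ab_group_add) \<Rightarrow> 'm set \<Rightarrow> 'm set \<Rightarrow> R2 set \<Rightarrow> bool" where
  "quot_iso_R_mod s M L P \<longleftrightarrow> (\<exists>\<phi> :: 'm \<Rightarrow> R2.
     (\<forall>x\<in>M. \<forall>y\<in>M. \<phi> (x + y) - (\<phi> x + \<phi> y) \<in> P) \<and>
     (\<forall>r. \<forall>x\<in>M. \<phi> (s r x) - r * \<phi> x \<in> P) \<and>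
     (\<forall>a. \<exists>x\<in>M. \<phi> x - a \<in> P) \<and>
     (\<forall>x\<in>M. \<phi> x \<in> P \<longleftrightarrow> x \<in> L))"

end

theory Submission imports Defs "HOL-Library.FuncSet" begin


definition sg :: "'a::ab_group_add set \<Rightarrow> bool" where
  "sg X \<longleftrightarrow> 0 \<in> X \<and> (\<forall>x\<in>X. \<forall>y\<in>X. x - y \<in> X)"

lemma sg_diff: "sg X \<Longrightarrow> x \<in> X \<Longrightarrow> y \<in> X \<Longrightarrow> x - y \<in> X"
  by (simp add: sg_def)
lemma sg_0: "sg X \<Longrightarrow> 0 \<in> X" by (simp add: sg_def)
lemma sg_neg: "sg X \<Longrightarrow> x \<in> X \<Longrightarrow> - x \<in> X"
  using sg_diff[of X 0 x] sg_0 by fastforce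
lemma sg_add: "sg X \<Longrightarrow> x \<in> X \<Longrightarrow> y \<in> X \<Longrightarrow> x + y \<in> X"
  using sg_diff[of X x "-y"] sg_neg[of X y] by fastforce

lemma (in module) sg_subspace: "subspace S \<Longrightarrow> sg S"
  by (simp add: sg_def subspace_0 subspace_diff)

lemma sg_int: "sg A \<Longrightarrow> sg B \<Longrightarrow> sg (A \<inter> B)"
  by (simp add: sg_def)

lemma img_same_kernel:
  assumes "\<forall>x\<in>A. \<forall>y\<in>A. f x = f y \<longleftrightarrow> g x = g y"
  shows "card (f ` A) = card (g ` A) \<and> (finite (f ` A) \<longleftrightarrow> finite (g ` A))"
proof -
  have "bij_betw (\<lambda>b. g (inv_into A f b)) (f`A) (g`A)"
    unfolding bij_betw_def
  proof
    show "inj_on (\<lambda>b. g (inv_into A f b)) (f ` A)"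
    proof (rule inj_onI)
      fix a b assume "a \<in> f ` A" "b \<in> f ` A" and e: "g (inv_into A f a) = g (inv_into A f b)"
      then have "inv_into A f a \<in> A" "inv_into A f b \<in> A" by (auto intro: inv_into_into)
      then have "f (inv_into A f a) = f (inv_into A f b)" using assms e by blast
      then show "a = b" using \<open>a \<in> f ` A\<close> \<open>b \<in> f ` A\<close> by (simp add: f_inv_into_f)
    qed
    show "(\<lambda>b. g (inv_into A f b)) ` f ` A = g ` A"
    proof
      show "(\<lambda>b. g (inv_into A f b)) ` f ` A \<subseteq> g ` A"
        by (auto intro: inv_into_into)
      show "g ` A \<subseteq> (\<lambda>b. g (inv_into A f b)) ` f ` A"
      proof
        fix y assume "y \<in> g ` A" then obtain x where x: "x \<in> A" "y = g x" by auto
        have "inv_into A f (f x) \<in> A" "f (inv_into A f (f x)) = f x"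
          using x by (auto intro: inv_into_into f_inv_into_f)
        then have "g (inv_into A f (f x)) = y" using assms x by blast
        then show "y \<in> (\<lambda>b. g (inv_into A f b)) ` f ` A" using x by force
      qed
    qed
  qed
  then show ?thesis by (simp add: bij_betw_same_card bij_betw_finite)
qed

abbreviation cst :: "'a::ab_group_add set \<Rightarrow> 'a set \<Rightarrow> 'a \<Rightarrow> 'a set" where
  "cst X K x \<equiv> {z\<in>X. x - z \<in> K}"

lemma quot_eq: "quot X K = cst X K ` X" by (simp add: quot_def)

lemma cos_eq:
  assumes "sg K" "x \<in> X" "y \<in> X"
  shows "cst X K x = cst X K y \<longleftrightarrow> x - y \<in> K"
proof
  assume "cst X K x = cst X K y"
  moreover have "y \<in> cst X K y" using assms sg_0[of K] by simp
  ultimately show "x - y \<in> K" by (metis (no_types, lifting) mem_Collect_eq)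
next
  assume h: "x - y \<in> K"
  have 1: "x - z \<in> K \<longleftrightarrow> y - z \<in> K" for z
  proof
    assume "x - z \<in> K"
    then have "(x - z) - (x - y) \<in> K" using h assms sg_diff by blast
    then show "y - z \<in> K" by simp
  next
    assume "y - z \<in> K"
    then have "(y - z) + (x - y) \<in> K" using h assms sg_add by blast
    then show "x - z \<in> K" by simp
  qed
  show "cst X K x = cst X K y" by (rule set_eqI) (simp add: 1)
qed


lemma quot_iso:
  fixes h :: "'a::ab_group_add \<Rightarrow> 'b::ab_group_add"
  assumes sgX: "sg X" and sgK: "sg K" and sgK': "sg K'"
    and hX: "\<And>x. x \<in> X \<Longrightarrow> h x \<in> X'"
    and add: "\<And>x y. x \<in> X \<Longrightarrow> y \<in> X \<Longrightarrow> h (x + y) - (h x + h y) \<in> K'"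
    and surj: "\<And>y. y \<in> X' \<Longrightarrow> \<exists>x\<in>X. h x - y \<in> K'"
    and ker: "\<And>x. x \<in> X \<Longrightarrow> h x \<in> K' \<longleftrightarrow> x \<in> K"
  shows "card (quot X K) = card (quot X' K') \<and> (finite (quot X K) \<longleftrightarrow> finite (quot X' K'))"
proof -
  have e1: "quot X' K' = (\<lambda>x. cst X' K' (h x)) ` X"
  proof
    show "quot X' K' \<subseteq> (\<lambda>x. cst X' K' (h x)) ` X"
    proof
      fix C assume "C \<in> quot X' K'"
      then obtain y where y: "y \<in> X'" "C = cst X' K' y" by (auto simp: quot_def)
      obtain x where x: "x \<in> X" "h x - y \<in> K'" using surj y by blast
      have "cst X' K' (h x) = cst X' K' y" using cos_eq[OF sgK' hX[OF x(1)] y(1)] x by simp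
      then show "C \<in> (\<lambda>x. cst X' K' (h x)) ` X" using x y by blast
    qed
    show "(\<lambda>x. cst X' K' (h x)) ` X \<subseteq> quot X' K'" using hX by (auto simp: quot_def)
  qed
  have kern: "cst X K x = cst X K y \<longleftrightarrow> cst X' K' (h x) = cst X' K' (h y)"
    if xy: "x \<in> X" "y \<in> X" for x y
  proof -
    have d: "x - y \<in> X" using sgX xy sg_diff by blast
    have a: "h x - (h (x - y) + h y) \<in> K'" using add[OF d xy(2)] by simp
    have "h x - h y \<in> K' \<longleftrightarrow> h (x - y) \<in> K'"
    proof
      assume "h x - h y \<in> K'"
      then have "(h x - h y) - (h x - (h (x - y) + h y)) \<in> K'" using a sgK' sg_diff by blast
      then show "h (x - y) \<in> K'" by simp
    next
      assume "h (x - y) \<in> K'"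
      then have "(h x - (h (x - y) + h y)) + h (x - y) \<in> K'" using a sgK' sg_add by blast
      then show "h x - h y \<in> K'" by simp
    qed
    then show ?thesis using cos_eq[OF sgK xy] cos_eq[OF sgK' hX[OF xy(1)] hX[OF xy(2)]] ker[OF d] by simp
  qed
  show ?thesis unfolding e1 quot_eq[of X K] using img_same_kernel[of X "cst X K" "\<lambda>x. cst X' K' (h x)"] kern
    by blast
qed

lemma quot_index:
  assumes sgX: "sg X" and sgZ: "sg Z" and sgY: "sg Y" and YZ: "Y \<subseteq> Z" and ZX: "Z \<subseteq> X"
    and fin: "finite (quot X Y)"
  shows "finite (quot X Z) \<and> finite (quot Z Y) \<and> card (quot X Y) = card (quot X Z) * card (quot Z Y)"
proof -
  define F where "F C = cst X Z (SOME x. x \<in> C)" for C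
  have "quot X Z = F ` quot X Y"
  proof -
    have "F (cst X Y x) = cst X Z x" if x: "x \<in> X" for x
    proof -
      have "x \<in> cst X Y x" using x sg_0[OF sgY] by simp
      then have "(SOME x'. x' \<in> cst X Y x) \<in> cst X Y x" by (rule someI)
      then have s1: "(SOME x'. x' \<in> cst X Y x) \<in> X" "x - (SOME x'. x' \<in> cst X Y x) \<in> Z" using YZ by auto
      then have "- (x - (SOME x'. x' \<in> cst X Y x)) \<in> Z" using sg_neg[OF sgZ] by blast
      then show ?thesis unfolding F_def using cos_eq[OF sgZ s1(1) x] by simp
    qed
    then show ?thesis unfolding quot_eq image_image by simp
  qed
  then have finZ: "finite (quot X Z)" using fin by simp
  have fib: "card (cst X Y ` D) = card (quot Z Y) \<and> (finite (cst X Y ` D) \<longleftrightarrow> finite (quot Z Y))"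
    if D: "D \<in> quot X Z" for D
  proof -
    obtain d where d: "d \<in> X" "D = cst X Z d" using D by (auto simp: quot_def)
    have DZ: "D = (\<lambda>z. d - z) ` Z"
    proof
      show "D \<subseteq> (\<lambda>z. d - z) ` Z"
      proof
        fix w assume "w \<in> D"
        then have "d - w \<in> Z" using d by simp
        moreover have "w = d - (d - w)" by simp
        ultimately show "w \<in> (\<lambda>z. d - z) ` Z" by blast
      qed
      show "(\<lambda>z. d - z) ` Z \<subseteq> D"
      proof
        fix w assume "w \<in> (\<lambda>z. d - z) ` Z"
        then obtain z where z: "z \<in> Z" "w = d - z" by blast
        have "w \<in> X" using z d sgX ZX sg_diff by blast
        then show "w \<in> D" using z d by simp
      qed
    qed
    have "cst X Y (d - z) = cst X Y (d - z') \<longleftrightarrow> cst Z Y z = cst Z Y z'"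
      if z: "z \<in> Z" "z' \<in> Z" for z z'
    proof -
      have "d - z \<in> X" "d - z' \<in> X" using z d sgX ZX sg_diff by blast+
      then have "cst X Y (d - z) = cst X Y (d - z') \<longleftrightarrow> z' - z \<in> Y" using cos_eq[OF sgY] by simp
      also have "\<dots> \<longleftrightarrow> z - z' \<in> Y" using sg_neg[OF sgY, of "z' - z"] sg_neg[OF sgY, of "z - z'"] by auto
      also have "\<dots> \<longleftrightarrow> cst Z Y z = cst Z Y z'" using cos_eq[OF sgY z] by simp
      finally show ?thesis .
    qed
    then have "card ((\<lambda>z. cst X Y (d - z)) ` Z) = card (cst Z Y ` Z) \<and>
       (finite ((\<lambda>z. cst X Y (d - z)) ` Z) \<longleftrightarrow> finite (cst Z Y ` Z))"
      using img_same_kernel[of Z "\<lambda>z. cst X Y (d - z)" "cst Z Y"] by blast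
    moreover have "cst X Y ` D = (\<lambda>z. cst X Y (d - z)) ` Z" unfolding DZ image_image ..
    ultimately show ?thesis unfolding quot_eq[of Z Y] by simp
  qed
  have sub: "cst X Y ` D \<subseteq> quot X Y" if "D \<in> quot X Z" for D
    using that by (auto simp: quot_def)
  have finZY: "finite (quot Z Y)"
  proof -
    have "cst X Z 0 \<in> cst X Z ` X" using sg_0[OF sgX] by (rule imageI)
    then have "cst X Z 0 \<in> quot X Z" by (simp only: quot_eq)
    note D0 = this
    have "finite (cst X Y ` cst X Z 0)" using sub[OF D0] fin by (rule finite_subset)
    then show ?thesis using fib[OF D0] by simp
  qed
  have U: "quot X Y = (\<Union>D\<in>quot X Z. cst X Y ` D)"
  proof
    show "quot X Y \<subseteq> (\<Union>D\<in>quot X Z. cst X Y ` D)"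
    proof
      fix C assume "C \<in> quot X Y"
      then obtain x where x: "x \<in> X" "C = cst X Y x" by (auto simp: quot_def)
      have "x \<in> cst X Z x" using x sg_0[OF sgZ] by simp
      moreover have "cst X Z x \<in> quot X Z" using x by (auto simp: quot_def)
      ultimately show "C \<in> (\<Union>D\<in>quot X Z. cst X Y ` D)" using x by blast
    qed
    show "(\<Union>D\<in>quot X Z. cst X Y ` D) \<subseteq> quot X Y" using sub by blast
  qed
  have disj: "cst X Y ` D1 \<inter> cst X Y ` D2 = {}"
    if D: "D1 \<in> quot X Z" "D2 \<in> quot X Z" "D1 \<noteq> D2" for D1 D2
  proof (rule ccontr)
    assume "cst X Y ` D1 \<inter> cst X Y ` D2 \<noteq> {}"
    then obtain x1 x2 where x: "x1 \<in> D1" "x2 \<in> D2" "cst X Y x1 = cst X Y x2" by blast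
    obtain d1 where d1: "d1 \<in> X" "D1 = cst X Z d1" using D by (auto simp: quot_def)
    obtain d2 where d2: "d2 \<in> X" "D2 = cst X Z d2" using D by (auto simp: quot_def)
    have xX: "x1 \<in> X" "x2 \<in> X" "d1 - x1 \<in> Z" "d2 - x2 \<in> Z" using x d1 d2 by auto
    have "x1 - x2 \<in> Y" using cos_eq[OF sgY xX(1,2)] x by simp
    then have "x1 - x2 \<in> Z" using YZ by blast
    then have "(d1 - x1) + (x1 - x2) - (d2 - x2) \<in> Z" using xX sgZ sg_add sg_diff by blast
    then have "d1 - d2 \<in> Z" by simp
    then have "D1 = D2" using d1 d2 cos_eq[OF sgZ d1(1) d2(1)] by simp
    then show False using D by simp
  qed
  have "card (quot X Y) = (\<Sum>D\<in>quot X Z. card (cst X Y ` D))"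
    unfolding U by (rule card_UN_disjoint) (use finZ fib finZY disj in auto)
  also have "\<dots> = (\<Sum>D\<in>quot X Z. card (quot Z Y))" using fib by simp
  also have "\<dots> = card (quot X Z) * card (quot Z Y)" by simp
  finally show ?thesis using finZ finZY by simp
qed



interpretation RM: module "(*) :: R2 \<Rightarrow> R2 \<Rightarrow> R2"
  by unfold_locales (simp_all add: algebra_simps)

lemma ideal_gen_subspace: "RM.subspace (ideal_gen S)"
  unfolding ideal_gen_def by simp

lemma ideal_gen_mult: "x \<in> ideal_gen S \<Longrightarrow> c * x \<in> ideal_gen S"
  unfolding ideal_gen_def by (rule RM.span_scale)

lemma upow_add: "upow (m + n) = upow m * upow n"
  by (simp add: upow_def mult_single)

lemma of_int_upow: "of_int c * upow n = Poly_Mapping.single n c"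
proof -
  have "(of_int c :: R2) = Poly_Mapping.single 0 c" using single_of_int[of c] by (metis of_int_eq_id id_apply)
  then show ?thesis by (simp add: upow_def mult_single)
qed

lemma pm_sum_single: "(\<Sum>n\<in>Poly_Mapping.keys r. Poly_Mapping.single n (Poly_Mapping.lookup r n)) = r"
proof (rule poly_mapping_eqI)
  fix k
  have "Poly_Mapping.lookup (\<Sum>n\<in>Poly_Mapping.keys r. Poly_Mapping.single n (Poly_Mapping.lookup r n)) k
      = (\<Sum>n\<in>Poly_Mapping.keys r. (Poly_Mapping.lookup r n when n = k))"
    unfolding lookup_sum by (simp add: lookup_single)
  also have "\<dots> = Poly_Mapping.lookup r k"
    by (cases "k \<in> Poly_Mapping.keys r") (simp_all add: when_def in_keys_iff)
  finally show "Poly_Mapping.lookup (\<Sum>n\<in>Poly_Mapping.keys r. Poly_Mapping.single n (Poly_Mapping.lookup r n)) k = Poly_Mapping.lookup r k" .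
qed

lemma rep_mod_b:
  assumes "finite_index_subgroup \<Lambda>"
  shows "\<exists>G0. finite G0 \<and> (\<forall>r::R2. \<exists>a. r - (\<Sum>g\<in>G0. of_int (a g) * upow g) \<in> b_ideal \<Lambda>)"
proof -
  define CS where "CS = (\<lambda>x. {y. x - y \<in> \<Lambda>}) ` UNIV"
  define G0 where "G0 = (\<lambda>C. SOME y. y \<in> C) ` CS"
  define rep where "rep n = (SOME y. y \<in> {y. n - y \<in> \<Lambda>})" for n
  have fin: "finite G0" using assms unfolding finite_index_subgroup_def G0_def CS_def by simp
  have z: "0 \<in> \<Lambda>" using assms unfolding finite_index_subgroup_def by simp
  have rep1: "n - rep n \<in> \<Lambda>" for n
  proof -
    have "n \<in> {y. n - y \<in> \<Lambda>}" using z by simp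
    then have "rep n \<in> {y. n - y \<in> \<Lambda>}" unfolding rep_def by (rule someI)
    then show ?thesis by simp
  qed
  have rep2: "rep n \<in> G0" for n unfolding G0_def CS_def rep_def by blast
  have key: "upow n - upow (rep n) \<in> b_ideal \<Lambda>" for n
  proof -
    have "upow (n - rep n) - 1 \<in> b_ideal \<Lambda>"
      unfolding b_ideal_def ideal_gen_def by (rule RM.span_base) (use rep1 in blast)
    then have "upow (rep n) * (upow (n - rep n) - 1) \<in> b_ideal \<Lambda>"
      unfolding b_ideal_def by (rule ideal_gen_mult)
    moreover have "upow (rep n) * (upow (n - rep n) - 1) = upow n - upow (rep n)"
      by (simp add: algebra_simps upow_add[symmetric])
    ultimately show ?thesis by simp
  qed
  define S where "S = {r::R2. \<exists>a. r - (\<Sum>g\<in>G0. of_int (a g) * upow g) \<in> b_ideal \<Lambda>}"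
  have bsub: "RM.subspace (b_ideal \<Lambda>)" unfolding b_ideal_def by (rule ideal_gen_subspace)
  have S0: "0 \<in> S" unfolding S_def mem_Collect_eq
    by (intro exI[of _ "\<lambda>_. 0"]) (simp add: RM.subspace_0[OF bsub])
  have Sadd: "x + y \<in> S" if xS: "x \<in> S" and yS: "y \<in> S" for x y
  proof -
    obtain a where a: "x - (\<Sum>g\<in>G0. of_int (a g) * upow g) \<in> b_ideal \<Lambda>" using xS unfolding S_def by blast
    obtain a' where a': "y - (\<Sum>g\<in>G0. of_int (a' g) * upow g) \<in> b_ideal \<Lambda>" using yS unfolding S_def by blast
    have "(x - (\<Sum>g\<in>G0. of_int (a g) * upow g)) + (y - (\<Sum>g\<in>G0. of_int (a' g) * upow g)) \<in> b_ideal \<Lambda>"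
      using RM.subspace_add[OF bsub a a'] .
    moreover have "(x - (\<Sum>g\<in>G0. of_int (a g) * upow g)) + (y - (\<Sum>g\<in>G0. of_int (a' g) * upow g))
       = (x + y) - (\<Sum>g\<in>G0. of_int (a g + a' g) * upow g)"
      by (simp add: sum.distrib algebra_simps)
    ultimately have h: "x + y - (\<Sum>g\<in>G0. of_int (a g + a' g) * upow g) \<in> b_ideal \<Lambda>" by simp
    show ?thesis unfolding S_def mem_Collect_eq by (rule exI[where x="\<lambda>g. a g + a' g"], rule h)
  qed
  have Ssingle: "Poly_Mapping.single n c \<in> S" for n c
  proof -
    define a where "a g = (if g = rep n then c else 0)" for g
    have "(\<Sum>g\<in>G0. of_int (a g) * upow g) = (\<Sum>g\<in>G0. if g = rep n then of_int c * upow g else 0)"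
      by (rule sum.cong) (simp_all add: a_def)
    also have "\<dots> = of_int c * upow (rep n)" using rep2[of n] fin by simp
    finally have "(\<Sum>g\<in>G0. of_int (a g) * upow g) = of_int c * upow (rep n)" .
    moreover have "of_int c * (upow n - upow (rep n)) \<in> b_ideal \<Lambda>"
      using key unfolding b_ideal_def by (rule ideal_gen_mult)
    ultimately have "Poly_Mapping.single n c - (\<Sum>g\<in>G0. of_int (a g) * upow g) \<in> b_ideal \<Lambda>"
      by (simp add: of_int_upow[symmetric] algebra_simps)
    then show ?thesis unfolding S_def by blast
  qed
  have "finite K \<Longrightarrow> (\<Sum>n\<in>K. Poly_Mapping.single n (f n)) \<in> S" for K f
    by (induction K rule: finite_induct) (simp_all add: S0 Sadd Ssingle)
  then have "r \<in> S" for r using pm_sum_single[of r] by (metis finite_keys)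
  then show ?thesis using fin unfolding S_def by blast
qed


theorem lemma5p2:
  fixes s :: "R2 \<Rightarrow> 'm::ab_group_add \<Rightarrow> 'm"
    and M L :: "'m set" and P :: "R2 set" and \<Lambda> :: "(int \<times> int) set"
  assumes "module s"
    and "noetherian_submodule s M" and "noetherian_submodule s L" and "L \<subseteq> M"
    and "prime_ideal P" and "quot_iso_R_mod s M L P"
    and "finite_index_subgroup \<Lambda>"
    and "finite (quot M (ideal_smult s (b_ideal \<Lambda>) M))"
  shows "\<exists>A. is_ideal A \<and> ideal_prod (b_ideal \<Lambda>) P \<subseteq> A \<and> A \<subseteq> b_ideal \<Lambda> \<inter> P \<and>
      finite (quot L (ideal_smult s (b_ideal \<Lambda>) L)) \<and>
      finite (quot (b_ideal \<Lambda> \<inter> P) A) \<and>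
      real (card (quot M (ideal_smult s (b_ideal \<Lambda>) M))) =
        real (card (quot UNIV (ideal_sum (b_ideal \<Lambda>) P))) *
        (real (card (quot L (ideal_smult s (b_ideal \<Lambda>) L))) /
         real (card (quot (b_ideal \<Lambda> \<inter> P) A)))"
proof -
  interpret Ms: module s by fact
  define b where "b = b_ideal \<Lambda>"
  define N where "N = ideal_smult s b M"
  define BL where "BL = ideal_smult s b L"
  have Msub: "Ms.subspace M" using assms(2) unfolding noetherian_submodule_def by blast
  have Lsub: "Ms.subspace L" using assms(3) unfolding noetherian_submodule_def by blast
  obtain F where F: "finite F" "Ms.span F = L" using assms(3) Lsub unfolding noetherian_submodule_def by blast
  have bsub: "RM.subspace b" unfolding b_def b_ideal_def by (rule ideal_gen_subspace)
  have Pid: "RM.subspace P" using assms(5) unfolding prime_ideal_def is_ideal_def by blast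
  have bmul: "c * x \<in> b" if "x \<in> b" for c x using RM.subspace_scale[OF bsub that] .
  have Pmul: "c * x \<in> P" if "x \<in> P" for c x using RM.subspace_scale[OF Pid that] .
  have Nsub: "Ms.subspace N" unfolding N_def ideal_smult_def by simp
  have BLsub: "Ms.subspace BL" unfolding BL_def ideal_smult_def by simp
  have genN: "s r m \<in> N" if "r \<in> b" "m \<in> M" for r m
    unfolding N_def ideal_smult_def by (rule Ms.span_base) (use that in blast)
  have genBL: "s r m \<in> BL" if "r \<in> b" "m \<in> L" for r m
    unfolding BL_def ideal_smult_def by (rule Ms.span_base) (use that in blast)
  have NM: "N \<subseteq> M" unfolding N_def ideal_smult_def
    by (rule Ms.span_minimal) (use Ms.subspace_scale[OF Msub] Msub in blast)+
  have BLL: "BL \<subseteq> L" unfolding BL_def ideal_smult_def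
    by (rule Ms.span_minimal) (use Ms.subspace_scale[OF Lsub] Lsub in blast)+
  have BLN: "BL \<subseteq> N" unfolding BL_def N_def ideal_smult_def
    by (rule Ms.span_mono) (use assms(4) in blast)
  have sgM: "sg M" and sgL: "sg L" and sgN: "sg N" and sgBL: "sg BL"
    using Msub Lsub Nsub BLsub by (simp_all add: Ms.sg_subspace)
  have sgP: "sg P" and sgb: "sg b" using Pid bsub by (simp_all add: RM.sg_subspace)
  obtain \<phi> where \<phi>add: "\<forall>x\<in>M. \<forall>y\<in>M. \<phi> (x + y) - (\<phi> x + \<phi> y) \<in> P"
    and \<phi>s: "\<forall>r. \<forall>x\<in>M. \<phi> (s r x) - r * \<phi> x \<in> P"
    and \<phi>surj: "\<forall>a. \<exists>x\<in>M. \<phi> x - a \<in> P"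
    and \<phi>ker: "\<forall>x\<in>M. \<phi> x \<in> P \<longleftrightarrow> x \<in> L"
    using assms(6) unfolding quot_iso_R_mod_def by blast
  obtain x0 where x0: "x0 \<in> M" "\<phi> x0 - 1 \<in> P" using \<phi>surj by blast
  have sx0M: "s r x0 \<in> M" for r using Ms.subspace_scale[OF Msub x0(1)] .
  have \<phi>x0: "\<phi> (s r x0) - r \<in> P" for r
  proof -
    have "(\<phi> (s r x0) - r * \<phi> x0) + r * (\<phi> x0 - 1) \<in> P"
      using sg_add[OF sgP] \<phi>s x0 Pmul by blast
    then show ?thesis by (simp add: algebra_simps)
  qed
  have \<phi>sub: "\<phi> (x - y) - (\<phi> x - \<phi> y) \<in> P" if "x \<in> M" "y \<in> M" for x y
  proof -
    have "x - y \<in> M" using sg_diff[OF sgM that] .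
    then have "\<phi> (x - y + y) - (\<phi> (x - y) + \<phi> y) \<in> P" using \<phi>add that by blast
    then have h: "\<phi> x - (\<phi> (x - y) + \<phi> y) \<in> P" by simp
    have "- (\<phi> x - (\<phi> (x - y) + \<phi> y)) \<in> P" using sg_neg[OF sgP h] .
    then show ?thesis by (simp add: algebra_simps)
  qed
  have toL: "m - s (\<phi> m) x0 \<in> L" if m: "m \<in> M" for m
  proof -
    have d: "m - s (\<phi> m) x0 \<in> M" using sg_diff[OF sgM m sx0M] .
    have "(\<phi> (m - s (\<phi> m) x0) - (\<phi> m - \<phi> (s (\<phi> m) x0))) - (\<phi> (s (\<phi> m) x0) - \<phi> m) \<in> P"
      using sg_diff[OF sgP \<phi>sub[OF m sx0M] \<phi>x0] .
    then have "\<phi> (m - s (\<phi> m) x0) \<in> P" by (simp add: algebra_simps)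
    then show ?thesis using \<phi>ker d by blast
  qed
  have PL: "s p x0 \<in> L" if p: "p \<in> P" for p
  proof -
    have "(\<phi> (s p x0) - p * \<phi> x0) + \<phi> x0 * p \<in> P"
      using sg_add[OF sgP] \<phi>s x0(1) Pmul[OF p] by blast
    then have "\<phi> (s p x0) \<in> P" by (simp add: algebra_simps)
    then show ?thesis using \<phi>ker sx0M by blast
  qed
  have K1: "\<exists>r\<in>b. y - s r x0 \<in> BL" if y: "y \<in> N" for y
  proof -
    have S: "Ms.subspace {y. \<exists>r\<in>b. y - s r x0 \<in> BL}"
    proof (rule Ms.subspaceI)
      show "0 \<in> {y. \<exists>r\<in>b. y - s r x0 \<in> BL}"
        using RM.subspace_0[OF bsub] Ms.subspace_0[OF BLsub] by force
    next
      fix y1 y2 assume "y1 \<in> {y. \<exists>r\<in>b. y - s r x0 \<in> BL}" "y2 \<in> {y. \<exists>r\<in>b. y - s r x0 \<in> BL}"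
      then obtain r1 r2 where r: "r1 \<in> b" "y1 - s r1 x0 \<in> BL" "r2 \<in> b" "y2 - s r2 x0 \<in> BL" by blast
      have "(y1 - s r1 x0) + (y2 - s r2 x0) \<in> BL" using Ms.subspace_add[OF BLsub r(2,4)] .
      then have "(y1 + y2) - s (r1 + r2) x0 \<in> BL" by (simp add: algebra_simps Ms.scale_left_distrib)
      moreover have "r1 + r2 \<in> b" using RM.subspace_add[OF bsub r(1,3)] .
      ultimately show "y1 + y2 \<in> {y. \<exists>r\<in>b. y - s r x0 \<in> BL}" by blast
    next
      fix c y1 assume "y1 \<in> {y. \<exists>r\<in>b. y - s r x0 \<in> BL}"
      then obtain r1 where r: "r1 \<in> b" "y1 - s r1 x0 \<in> BL" by blast
      have "s c (y1 - s r1 x0) \<in> BL" using Ms.subspace_scale[OF BLsub r(2)] .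
      then have "s c y1 - s (c * r1) x0 \<in> BL" by (simp add: Ms.scale_right_diff_distrib)
      then show "s c y1 \<in> {y. \<exists>r\<in>b. y - s r x0 \<in> BL}" using bmul[OF r(1)] by blast
    qed
    have G: "x \<in> {y. \<exists>r\<in>b. y - s r x0 \<in> BL}" if xg: "x \<in> {s r m | r m. r \<in> b \<and> m \<in> M}" for x
    proof -
      obtain r m where rm: "x = s r m" "r \<in> b" "m \<in> M" using xg by blast
      have "s r (m - s (\<phi> m) x0) \<in> BL" using genBL[OF rm(2) toL[OF rm(3)]] .
      then have "x - s (r * \<phi> m) x0 \<in> BL" using rm(1) by (simp add: Ms.scale_right_diff_distrib)
      moreover have "r * \<phi> m \<in> b" using bmul[OF rm(2), of "\<phi> m"] by (simp add: mult.commute)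
      ultimately show ?thesis by blast
    qed
    have "y \<in> Ms.span {s r m | r m. r \<in> b \<and> m \<in> M}" using y unfolding N_def ideal_smult_def .
    from Ms.span_subspace_induct[OF this S G] show ?thesis by simp
  qed
  have K2: "\<exists>\<beta>\<in>b. \<phi> y - \<beta> \<in> P" if y: "y \<in> N" for y
  proof -
    obtain r where r: "r \<in> b" "y - s r x0 \<in> BL" using K1[OF y] by blast
    have yM: "y \<in> M" using y NM by blast
    have "\<phi> (y - s r x0) \<in> P" using \<phi>ker sg_diff[OF sgM yM sx0M] r(2) BLL by blast
    then have "\<phi> (y - s r x0) - (\<phi> (y - s r x0) - (\<phi> y - \<phi> (s r x0))) + (\<phi> (s r x0) - r) \<in> P"
      using sg_add[OF sgP] sg_diff[OF sgP] \<phi>sub[OF yM sx0M] \<phi>x0 by blast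
    then have "\<phi> y - r \<in> P" by (simp add: algebra_simps)
    then show ?thesis using r(1) by blast
  qed
  have K3: "s p y \<in> BL" if p: "p \<in> P" and y: "y \<in> N" for p y
  proof -
    obtain r where r: "r \<in> b" "y - s r x0 \<in> BL" using K1[OF y] by blast
    have "s p (y - s r x0) + s r (s p x0) \<in> BL"
      using Ms.subspace_add[OF BLsub Ms.subspace_scale[OF BLsub r(2)] genBL[OF r(1) PL[OF p]]] .
    then show ?thesis by (simp add: Ms.scale_right_diff_distrib mult.commute)
  qed
  have finMN: "finite (quot M N)" using assms(8) unfolding N_def b_def .
  have pigeon: "\<exists>k>0. s (of_int k) x \<in> N" if xM: "x \<in> M" for x
  proof (rule ccontr)
    assume nk: "\<not> (\<exists>k>0. s (of_int k) x \<in> N)"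
    define c where "c = card (quot M N)"
    define f where "f j = cst M N (s (of_int j) x)" for j :: int
    have mj: "s (of_int j) x \<in> M" for j using Ms.subspace_scale[OF Msub xM] .
    have sub: "f ` {0..int c} \<subseteq> quot M N"
    proof
      fix C assume "C \<in> f ` {0..int c}"
      then obtain j where "C = f j" by blast
      then show "C \<in> quot M N" unfolding quot_eq f_def using mj by blast
    qed
    have inj: "inj_on f {0..int c}"
    proof (rule inj_onI)
      fix i j assume ij: "i \<in> {0..int c}" "j \<in> {0..int c}" "f i = f j"
      have "s (of_int i) x - s (of_int j) x \<in> N" using cos_eq[OF sgN mj mj] ij(3) unfolding f_def by blast
      then have d: "s (of_int (i - j)) x \<in> N" by (simp add: Ms.scale_left_diff_distrib)
      have "s (of_int (j - i)) x = - s (of_int (i - j)) x"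
        by (metis minus_diff_eq of_int_minus Ms.scale_minus_left)
      then have d2: "s (of_int (j - i)) x \<in> N" using sg_neg[OF sgN d] by simp
      show "i = j"
      proof (rule ccontr)
        assume "i \<noteq> j"
        then have "i - j > 0 \<or> j - i > 0" by arith
        then show False using d d2 nk by blast
      qed
    qed
    have "card {0..int c} \<le> c" using card_inj_on_le[OF inj sub finMN] c_def by simp
    then show False by simp
  qed
  obtain k0 where k0: "k0 > 0" "s (of_int k0) x0 \<in> N" using pigeon[OF x0(1)] by blast
  obtain \<beta> where \<beta>: "\<beta> \<in> b" "\<phi> (s (of_int k0) x0) - \<beta> \<in> P" using K2[OF k0(2)] by blast
  define \<pi> where "\<pi> = of_int k0 - \<beta>"
  have \<pi>P: "\<pi> \<in> P"
  proof -
    have "(\<phi> (s (of_int k0) x0) - \<beta>) - (\<phi> (s (of_int k0) x0) - of_int k0) \<in> P"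
      using sg_diff[OF sgP \<beta>(2) \<phi>x0] .
    then show ?thesis unfolding \<pi>_def by simp
  qed
  have kill: "\<exists>c>0. s (of_int c) e \<in> BL" if eL: "e \<in> L" for e
  proof -
    have eM: "e \<in> M" using eL assms(4) by blast
    obtain k where k: "k > 0" "s (of_int k) e \<in> N" using pigeon[OF eM] by blast
    define y where "y = s (of_int k) e"
    have yL: "y \<in> L" unfolding y_def using Ms.subspace_scale[OF Lsub eL] .
    have "s \<beta> y + s \<pi> y \<in> BL"
      using Ms.subspace_add[OF BLsub genBL[OF \<beta>(1) yL] K3[OF \<pi>P k(2)[folded y_def]]] .
    then have "s (of_int (k0 * k)) e \<in> BL"
      unfolding y_def \<pi>_def
    proof -
      assume h: "s \<beta> (s (of_int k) e) + s (of_int k0 - \<beta>) (s (of_int k) e) \<in> BL"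
      have eq: "\<beta> * of_int k + (of_int k0 - \<beta>) * of_int k = (of_int (k0 * k) :: R2)"
        by (simp add: algebra_simps)
      show "s (of_int (k0 * k)) e \<in> BL" using h
        by (simp only: Ms.scale_scale Ms.scale_left_distrib[symmetric] eq)
    qed
    moreover have "k0 * k > 0" using k0 k by simp
    ultimately show ?thesis by blast
  qed
  have finL: "finite (quot L BL)"
  proof -
    obtain G0 where G0: "finite G0" "\<forall>r::R2. \<exists>a. r - (\<Sum>g\<in>G0. of_int (a g) * upow g) \<in> b"
      using rep_mod_b[OF assms(7)] unfolding b_def by blast
    obtain Ar where Ar: "\<And>r. r - (\<Sum>g\<in>G0. of_int (Ar r g) * upow g) \<in> b"
      using G0(2) by metis
    have "\<forall>e\<in>L. \<exists>c. c > 0 \<and> s (of_int c) e \<in> BL" using kill by blast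
    then obtain cL where cL: "\<forall>e\<in>L. cL e > 0 \<and> s (of_int (cL e)) e \<in> BL"
      using bchoice[of L "\<lambda>e c. c > 0 \<and> s (of_int c) e \<in> BL"] by blast
    have FL: "F \<subseteq> L" using F(2) Ms.span_superset[of F] by blast
    define e where "e f g = s (upow g) f" for f g
    have eL: "e f g \<in> L" if "f \<in> F" for f g unfolding e_def using Ms.subspace_scale[OF Lsub] FL that by blast
    define rp where "rp t = (\<Sum>f\<in>F. \<Sum>g\<in>G0. s (of_int (t f g)) (e f g))" for t
    define T where "T = PiE F (\<lambda>f. PiE G0 (\<lambda>g. {0..<cL (e f g)}))"
    have finT: "finite T" unfolding T_def using F(1) G0(1) by (intro finite_PiE) auto
    have rpL: "rp t \<in> L" for t unfolding rp_def
      by (intro Ms.subspace_sum[OF Lsub] Ms.subspace_scale[OF Lsub] eL)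
    have rep: "\<exists>t\<in>T. l - rp t \<in> BL" if lL: "l \<in> L" for l
    proof -
      obtain u where u: "l = (\<Sum>f\<in>F. s (u f) f)" using lL F Ms.span_finite[OF F(1)] by blast
      define a where "a f g = Ar (u f) g" for f g
      have 1: "l - rp a \<in> BL"
      proof -
        have "l - rp a = (\<Sum>f\<in>F. s (u f - (\<Sum>g\<in>G0. of_int (a f g) * upow g)) f)"
          unfolding u rp_def e_def
          by (simp add: Ms.scale_left_diff_distrib Ms.scale_sum_left sum_subtractf)
        also have "\<dots> \<in> BL" unfolding a_def
          by (intro Ms.subspace_sum[OF BLsub] genBL) (use Ar FL in auto)
        finally show ?thesis .
      qed
      define t where "t = restrict (\<lambda>f. restrict (\<lambda>g. a f g mod cL (e f g)) G0) F"
      have cpos: "cL (e f g) > 0" if "f \<in> F" for f g using cL eL[OF that] by blast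
      have tT: "t \<in> T" unfolding T_def t_def restrict_PiE_iff
      proof (intro ballI)
        fix f g assume fg: "f \<in> F" "g \<in> G0"
        show "a f g mod cL (e f g) \<in> {0..<cL (e f g)}" using cpos[OF fg(1)] by simp
      qed
      have trm: "s (of_int (a f g)) (e f g) - s (of_int (t f g)) (e f g) \<in> BL"
        if fg: "f \<in> F" "g \<in> G0" for f g
      proof -
        have tfg: "t f g = a f g mod cL (e f g)" unfolding t_def using fg by simp
        have "of_int (a f g) - of_int (t f g) = (of_int (a f g div cL (e f g)) * of_int (cL (e f g)) :: R2)"
          unfolding tfg of_int_diff[symmetric] of_int_mult[symmetric]
          by (simp add: minus_mod_eq_mult_div mult.commute)
        then have "s (of_int (a f g)) (e f g) - s (of_int (t f g)) (e f g)
           = s (of_int (a f g div cL (e f g))) (s (of_int (cL (e f g))) (e f g))"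
          by (simp only: Ms.scale_left_diff_distrib[symmetric] Ms.scale_scale)
        also have "\<dots> \<in> BL" using Ms.subspace_scale[OF BLsub] cL eL[OF fg(1)] by blast
        finally show ?thesis .
      qed
      have 2: "rp a - rp t \<in> BL"
      proof -
        have "rp a - rp t = (\<Sum>f\<in>F. \<Sum>g\<in>G0. s (of_int (a f g)) (e f g) - s (of_int (t f g)) (e f g))"
          unfolding rp_def by (simp only: sum_subtractf)
        also have "\<dots> \<in> BL"
          by (intro Ms.subspace_sum[OF BLsub] trm)
        finally show ?thesis .
      qed
      have "(l - rp a) + (rp a - rp t) \<in> BL" using Ms.subspace_add[OF BLsub 1 2] .
      then show ?thesis using tT by auto
    qed
    have "quot L BL \<subseteq> (\<lambda>t. cst L BL (rp t)) ` T"
    proof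
      fix C assume "C \<in> quot L BL"
      then obtain l where l: "l \<in> L" "C = cst L BL l" unfolding quot_eq by blast
      obtain t where t: "t \<in> T" "l - rp t \<in> BL" using rep[OF l(1)] by blast
      have "C = cst L BL (rp t)" using cos_eq[OF sgBL l(1) rpL] t(2) l(2) by simp
      then show "C \<in> (\<lambda>t. cst L BL (rp t)) ` T" using t(1) by blast
    qed
    then show ?thesis using finT finite_surj by blast
  qed
  define LN where "LN = {l + n | l n. l \<in> L \<and> n \<in> N}"
  define KP where "KP = ideal_sum b P"
  define A where "A = {r \<in> b \<inter> P. s r x0 \<in> BL}"
  have sgLN: "sg LN" unfolding sg_def
  proof (intro conjI ballI)
    show "0 \<in> LN" unfolding LN_def using sg_0[OF sgL] sg_0[OF sgN] by force
    fix x y assume "x \<in> LN" "y \<in> LN"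
    then obtain l1 n1 l2 n2 where "x = l1 + n1" "y = l2 + n2" "l1 \<in> L" "n1 \<in> N" "l2 \<in> L" "n2 \<in> N"
      unfolding LN_def by blast
    moreover have "l1 + n1 - (l2 + n2) = (l1 - l2) + (n1 - n2)" by simp
    ultimately show "x - y \<in> LN" unfolding LN_def using sg_diff[OF sgL] sg_diff[OF sgN] by blast
  qed
  have sgKP: "sg KP" unfolding sg_def
  proof (intro conjI ballI)
    show "0 \<in> KP" unfolding KP_def ideal_sum_def using sg_0[OF sgb] sg_0[OF sgP] by force
    fix x y assume "x \<in> KP" "y \<in> KP"
    then obtain l1 n1 l2 n2 where "x = l1 + n1" "y = l2 + n2" "l1 \<in> b" "n1 \<in> P" "l2 \<in> b" "n2 \<in> P"
      unfolding KP_def ideal_sum_def by blast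
    moreover have "l1 + n1 - (l2 + n2) = (l1 - l2) + (n1 - n2)" by simp
    ultimately show "x - y \<in> KP" unfolding KP_def ideal_sum_def using sg_diff[OF sgb] sg_diff[OF sgP] by blast
  qed
  have NLN: "N \<subseteq> LN" unfolding LN_def
  proof
    fix n assume "n \<in> N" then show "n \<in> {l + n |l n. l \<in> L \<and> n \<in> N}" using sg_0[OF sgL] by force
  qed
  have LLN: "L \<subseteq> LN" unfolding LN_def
  proof
    fix l assume "l \<in> L" then show "l \<in> {l + n |l n. l \<in> L \<and> n \<in> N}" using sg_0[OF sgN] by force
  qed
  have LNM: "LN \<subseteq> M" unfolding LN_def using sg_add[OF sgM] assms(4) NM by blast
  have PKP: "P \<subseteq> KP" unfolding KP_def ideal_sum_def
  proof
    fix p assume "p \<in> P" then show "p \<in> {x + y |x y. x \<in> b \<and> y \<in> P}" using sg_0[OF sgb] by force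
  qed
  have s1: "finite (quot M LN) \<and> finite (quot LN N) \<and> card (quot M N) = card (quot M LN) * card (quot LN N)"
    using quot_index[OF sgM sgLN sgN NLN LNM finMN] .
  have s2: "card (quot M LN) = card (quot UNIV KP) \<and> (finite (quot M LN) \<longleftrightarrow> finite (quot UNIV KP))"
  proof (rule quot_iso[OF sgM sgLN sgKP])
    show "\<phi> x \<in> UNIV" for x by simp
    show "\<phi> (x + y) - (\<phi> x + \<phi> y) \<in> KP" if "x \<in> M" "y \<in> M" for x y using \<phi>add that PKP by blast
    show "\<exists>x\<in>M. \<phi> x - y \<in> KP" for y using \<phi>surj PKP by blast
    show "\<phi> x \<in> KP \<longleftrightarrow> x \<in> LN" if xM: "x \<in> M" for x
    proof
      assume "\<phi> x \<in> KP"
      then obtain \<beta>1 p where bp: "\<phi> x = \<beta>1 + p" "\<beta>1 \<in> b" "p \<in> P" unfolding KP_def ideal_sum_def by blast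
      have d: "x - s \<beta>1 x0 \<in> M" using sg_diff[OF sgM xM sx0M] .
      have "(\<phi> (x - s \<beta>1 x0) - (\<phi> x - \<phi> (s \<beta>1 x0))) - (\<phi> (s \<beta>1 x0) - \<beta>1) + p \<in> P"
        using sg_add[OF sgP] sg_diff[OF sgP] \<phi>sub[OF xM sx0M] \<phi>x0 bp(3) by blast
      then have "\<phi> (x - s \<beta>1 x0) \<in> P" using bp(1) by (simp add: algebra_simps)
      then have "x - s \<beta>1 x0 \<in> L" using \<phi>ker d by blast
      moreover have "s \<beta>1 x0 \<in> N" using genN[OF bp(2) x0(1)] .
      moreover have "x = (x - s \<beta>1 x0) + s \<beta>1 x0" by simp
      ultimately show "x \<in> LN" unfolding LN_def by blast
    next
      assume "x \<in> LN"
      then obtain l n where ln: "x = l + n" "l \<in> L" "n \<in> N" unfolding LN_def by blast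
      have lM: "l \<in> M" "n \<in> M" using ln assms(4) NM by blast+
      obtain \<beta>1 where \<beta>1: "\<beta>1 \<in> b" "\<phi> n - \<beta>1 \<in> P" using K2[OF ln(3)] by blast
      have "\<phi> l \<in> P" using \<phi>ker lM ln(2) by blast
      then have "(\<phi> (l + n) - (\<phi> l + \<phi> n)) + \<phi> l + (\<phi> n - \<beta>1) \<in> P"
        using sg_add[OF sgP] \<phi>add lM \<beta>1(2) by blast
      then have "\<phi> x - \<beta>1 \<in> P" using ln(1) by (simp add: algebra_simps)
      moreover have "\<phi> x = \<beta>1 + (\<phi> x - \<beta>1)" by simp
      ultimately show "\<phi> x \<in> KP" unfolding KP_def ideal_sum_def using \<beta>1(1) by blast
    qed
  qed
  have sgLN': "sg (L \<inter> N)" using sg_int[OF sgL sgN] .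
  have s3: "card (quot L (L \<inter> N)) = card (quot LN N) \<and> (finite (quot L (L \<inter> N)) \<longleftrightarrow> finite (quot LN N))"
  proof (rule quot_iso[OF sgL sgLN' sgN, where h="\<lambda>x. x"])
    show "x \<in> LN" if "x \<in> L" for x using that LLN by blast
    show "x + y - (x + y) \<in> N" for x y using sg_0[OF sgN] by simp
    show "\<exists>x\<in>L. x - y \<in> N" if yLN: "y \<in> LN" for y
    proof -
      obtain l n where ln: "y = l + n" "l \<in> L" "n \<in> N" using yLN unfolding LN_def by blast
      have "l - y = - n" using ln(1) by simp
      then show ?thesis using sg_neg[OF sgN ln(3)] ln(2) by metis
    qed
    show "x \<in> N \<longleftrightarrow> x \<in> L \<inter> N" if "x \<in> L" for x using that by blast
  qed
  have s4: "finite (quot L (L \<inter> N)) \<and> finite (quot (L \<inter> N) BL) \<and>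
      card (quot L BL) = card (quot L (L \<inter> N)) * card (quot (L \<inter> N) BL)"
    using quot_index[OF sgL sgLN' sgBL _ _ finL] BLL BLN by blast
  have sgbP: "sg (b \<inter> P)" using sg_int[OF sgb sgP] .
  have sgA: "sg A" unfolding sg_def A_def
  proof (intro conjI ballI)
    show "0 \<in> {r \<in> b \<inter> P. s r x0 \<in> BL}" using sg_0[OF sgbP] sg_0[OF sgBL] by simp
    fix x y assume xy: "x \<in> {r \<in> b \<inter> P. s r x0 \<in> BL}" "y \<in> {r \<in> b \<inter> P. s r x0 \<in> BL}"
    then have "s x x0 - s y x0 \<in> BL" using sg_diff[OF sgBL] by blast
    then have "s (x - y) x0 \<in> BL" by (simp add: Ms.scale_left_diff_distrib)
    then show "x - y \<in> {r \<in> b \<inter> P. s r x0 \<in> BL}" using xy sg_diff[OF sgbP] by blast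
  qed
  have s5: "card (quot (b \<inter> P) A) = card (quot (L \<inter> N) BL) \<and>
     (finite (quot (b \<inter> P) A) \<longleftrightarrow> finite (quot (L \<inter> N) BL))"
  proof (rule quot_iso[OF sgbP sgA sgBL, where h="\<lambda>r. s r x0"])
    show "s r x0 \<in> L \<inter> N" if "r \<in> b \<inter> P" for r using PL genN x0(1) that by blast
    show "s (x + y) x0 - (s x x0 + s y x0) \<in> BL" for x y
      using sg_0[OF sgBL] by (simp add: Ms.scale_left_distrib)
    show "\<exists>x\<in>b \<inter> P. s x x0 - y \<in> BL" if y: "y \<in> L \<inter> N" for y
    proof -
      obtain r where r: "r \<in> b" "y - s r x0 \<in> BL" using K1 y by blast
      have "y - (y - s r x0) \<in> L" using sg_diff[OF sgL] y r(2) BLL by blast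
      then have sL: "s r x0 \<in> L" by simp
      then have "\<phi> (s r x0) \<in> P" using \<phi>ker sx0M by blast
      then have "\<phi> (s r x0) - (\<phi> (s r x0) - r) \<in> P" using sg_diff[OF sgP _ \<phi>x0] by blast
      then have "r \<in> P" by simp
      moreover have "s r x0 - y \<in> BL" using sg_neg[OF sgBL r(2)] by simp
      ultimately show ?thesis using r(1) by blast
    qed
    show "s x x0 \<in> BL \<longleftrightarrow> x \<in> A" if "x \<in> b \<inter> P" for x using that unfolding A_def by blast
  qed
  have finA: "finite (quot (b \<inter> P) A)" using s4 s5 by blast
  have posA: "card (quot (b \<inter> P) A) > 0"
  proof -
    have "cst (b \<inter> P) A 0 \<in> quot (b \<inter> P) A" unfolding quot_eq using sg_0[OF sgbP] by (rule imageI)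
    then show ?thesis using finA card_gt_0_iff by blast
  qed
  have ideal: "is_ideal A" unfolding is_ideal_def
  proof (rule RM.subspaceI)
    show "0 \<in> A" using sgA sg_0 by blast
    show "x + y \<in> A" if "x \<in> A" "y \<in> A" for x y using sgA sg_add that by blast
    fix c x assume x: "x \<in> A"
    have "c * x \<in> b" "c * x \<in> P" using x bmul Pmul unfolding A_def by blast+
    moreover have "s c (s x x0) \<in> BL" using x Ms.subspace_scale[OF BLsub] unfolding A_def by blast
    then have "s (c * x) x0 \<in> BL" by simp
    ultimately show "c * x \<in> A" unfolding A_def by blast
  qed
  have prodA: "ideal_prod b P \<subseteq> A" unfolding ideal_prod_def ideal_gen_def
  proof (rule RM.span_minimal)
    show "RM.subspace A" using ideal unfolding is_ideal_def .
    show "{x * y |x y. x \<in> b \<and> y \<in> P} \<subseteq> A"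
    proof
      fix z assume "z \<in> {x * y |x y. x \<in> b \<and> y \<in> P}"
      then obtain x y where xy: "z = x * y" "x \<in> b" "y \<in> P" by blast
      have "x * y \<in> b" using bmul[OF xy(2), of y] by (simp add: mult.commute)
      moreover have "x * y \<in> P" using Pmul[OF xy(3)] by blast
      moreover have "s (x * y) x0 \<in> BL" using genBL[OF xy(2) PL[OF xy(3)]] by simp
      ultimately show "z \<in> A" unfolding A_def xy(1) by blast
    qed
  qed
  have cardeq: "real (card (quot M N)) = real (card (quot UNIV KP)) * (real (card (quot L BL)) / real (card (quot (b \<inter> P) A)))"
  proof -
    have "card (quot M N) = card (quot UNIV KP) * card (quot L (L \<inter> N))" using s1 s2 s3 by simp
    moreover have "card (quot L BL) = card (quot L (L \<inter> N)) * card (quot (b \<inter> P) A)" using s4 s5 by simp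
    ultimately show ?thesis using posA by simp
  qed
  have "\<exists>A. is_ideal A \<and> ideal_prod b P \<subseteq> A \<and> A \<subseteq> b \<inter> P \<and>
      finite (quot L BL) \<and> finite (quot (b \<inter> P) A) \<and>
      real (card (quot M N)) = real (card (quot UNIV KP)) * (real (card (quot L BL)) / real (card (quot (b \<inter> P) A)))"
    using ideal prodA finL finA cardeq unfolding A_def by blast
  then show ?thesis unfolding b_def N_def BL_def KP_def .
qed


end
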